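(* Let $\mathcal{S}$ be a Borel space and $(\mathbf{y},\mathbf{X})$ a random element of $\{\pm1\}^n\times\mathcal{S}$. Let $\mathcal{F}$ be a family of Borel maps from $\mathcal{S}$ to $\{\pm1\}^n$. Define $\mathcal{M}(\mathbf{u},\mathbf{v})=\min\{\frac1n\sum_i\mathbf{1}\{u_i\ne v_i\},\frac1n\sum_i\mathbf{1}\{-u_i\ne v_i\}\}$ for $\mathbf{u},\mathbf{v}\in\{\pm1\}^n$, and $f(\cdot\mid\tilde{\mathbf{X}},\tilde{\mathbf{y}}_{-i})=\mathbb{P}(y_i=\cdot\mid\mathbf{X}=\tilde{\mathbf{X}},\mathbf{y}_{-i}=\tilde{\mathbf{y}}_{-i})$ for $i\in[n]$. Then $\inf_{\hat{\mathbf{y}}\in\mathcal{F}}\mathbb{E}\mathcal{M}(\hat{\mathbf{y}}(\mathbf{X}),\mathbf{y})\ge\frac{n-1}{3n-1}\cdot\frac1n\sum_{i=1}^n\mathbb{P}\big[f(y_i\mid\mathbf{X},\mathbf{y}_{-i})<f(-y_i\mid\mathbf{X},\mathbf{y}_{-i})\big]$.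
   Context: $\mathbf{y}_{-i}\in\{\pm1\}^{n-1}$ denotes $\mathbf{y}$ with its $i$-th entry removed; $f$ is a (regular) conditional probability mass function of $y_i$ given $(\mathbf{X},\mathbf{y}_{-i})$. *)

theory Defs
  imports "HOL-Probability.Probability"
begin

text \<open>Sign vectors in {+-1}^n, represented as functions nat => int that are
  +-1 on the coordinates 0..n-1 and 0 elsewhere (canonical representatives).\<close>
definition signvecs :: "nat \<Rightarrow> (nat \<Rightarrow> int) set" where
  "signvecs n = {v. (\<forall>i<n. v i \<in> {-1, 1}) \<and> (\<forall>i\<ge>n. v i = 0)}"

definition mismatch :: "nat \<Rightarrow> (nat \<Rightarrow> int) \<Rightarrow> (nat \<Rightarrow> int) \<Rightarrow> real" where
  "mismatch n u v = min (card {i. i < n \<and> u i \<noteq> v i} / real n)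
                        (card {i. i < n \<and> - u i \<noteq> v i} / real n)"

text \<open>y_{-i}: remove the i-th entry (0-based), shifting later entries down.\<close>
definition drop_coord :: "nat \<Rightarrow> (nat \<Rightarrow> int) \<Rightarrow> (nat \<Rightarrow> int)" where
  "drop_coord i v = (\<lambda>j. if j < i then v j else v (Suc j))"

text \<open>f is a regular conditional probability mass function of y_i given
  (X, y_{-i}): for each coordinate i<n, each value b of y_i, f i b (X) (y_{-i})
  is a version of P(y_i = b | X, y_{-i}) (measurable, and integrating correctly
  over all generating events {X in A, y_{-i} = w}), and f i . x w is a
  probability mass function on {+-1}.\<close>
definition is_cond_pmf ::
  "'a measure \<Rightarrow> nat \<Rightarrow> ('a \<Rightarrow> 's::topological_space) \<Rightarrow> ('a \<Rightarrow> nat \<Rightarrow> int)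
     \<Rightarrow> (nat \<Rightarrow> int \<Rightarrow> 's \<Rightarrow> (nat \<Rightarrow> int) \<Rightarrow> real) \<Rightarrow> bool" where
  "is_cond_pmf M n X y f \<longleftrightarrow>
     (\<forall>i<n.
        (\<forall>x w. f i 1 x w \<ge> 0 \<and> f i (-1) x w \<ge> 0 \<and> f i 1 x w + f i (-1) x w = 1) \<and>
        (\<forall>b\<in>{-1, 1}. \<forall>w. (\<lambda>x. f i b x w) \<in> borel_measurable borel) \<and>
        (\<forall>b\<in>{-1, 1}. \<forall>A\<in>sets borel. \<forall>w.
           measure M {\<omega> \<in> space M. y \<omega> i = b \<and> X \<omega> \<in> A \<and> drop_coord i (y \<omega>) = w}
           = (\<integral>\<omega>. indicator {\<omega> \<in> space M. X \<omega> \<in> A \<and> drop_coord i (y \<omega>) = w} \<omega>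
                     * f i b (X \<omega>) w \<partial>M)))"

end

theory Submission
  imports Defs
begin

lemma finite_signvecs: "finite (signvecs n)"
proof (rule finite_subset[OF _ finite_set_of_finite_funs[of "{..<n}" "{-1,1::int}" 0]])
  show "signvecs n \<subseteq> {f. \<forall>x. (x \<in> {..<n} \<longrightarrow> f x \<in> {-1,1}) \<and> (x \<notin> {..<n} \<longrightarrow> f x = 0)}"
    by (auto simp: signvecs_def)
qed auto

lemma pred_sets:
  assumes y: "y \<in> M \<rightarrow>\<^sub>M count_space S"
  shows "{\<omega> \<in> space M. P (y \<omega>)} \<in> sets M"
proof -
  have "y -` {v\<in>S. P v} \<inter> space M \<in> sets M" by (rule measurable_sets[OF y]) simp
  moreover have "y -` {v\<in>S. P v} \<inter> space M = {\<omega> \<in> space M. P (y \<omega>)}"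
    using measurable_space[OF y] by auto
  ultimately show ?thesis by simp
qed

lemma pair_meas:
  assumes a: "a \<in> M \<rightarrow>\<^sub>M count_space S" and b: "b \<in> M \<rightarrow>\<^sub>M count_space S" and fin: "finite S"
  shows "(\<lambda>\<omega>. (a \<omega>, b \<omega>)) \<in> M \<rightarrow>\<^sub>M count_space (S \<times> S)"
proof -
  have "(\<lambda>\<omega>. (a \<omega>, b \<omega>)) \<in> M \<rightarrow>\<^sub>M count_space S \<Otimes>\<^sub>M count_space S"
    using a b by (rule measurable_Pair)
  then show ?thesis using fin by (simp add: pair_measure_countable countable_finite)
qed

lemma pair_pred_sets:
  assumes a: "a \<in> M \<rightarrow>\<^sub>M count_space S" and b: "b \<in> M \<rightarrow>\<^sub>M count_space S" and fin: "finite S"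
  shows "{\<omega> \<in> space M. Q (a \<omega>) (b \<omega>)} \<in> sets M"
  using pred_sets[OF pair_meas[OF a b fin], of "\<lambda>p. Q (fst p) (snd p)"] by simp

lemma pair_fun_meas:
  assumes a: "a \<in> M \<rightarrow>\<^sub>M count_space S" and b: "b \<in> M \<rightarrow>\<^sub>M count_space S" and fin: "finite S"
  shows "(\<lambda>\<omega>. h (a \<omega>) (b \<omega>)) \<in> borel_measurable M"
proof -
  have "(\<lambda>p. h (fst p) (snd p)) \<in> count_space (S \<times> S) \<rightarrow>\<^sub>M borel" by simp
  from measurable_compose[OF pair_meas[OF a b fin] this] show ?thesis by simp
qed

lemma coord_bound:
  fixes M :: "'a measure" and X :: "'a \<Rightarrow> 's::polish_space"
    and y :: "'a \<Rightarrow> nat \<Rightarrow> int"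
    and f :: "nat \<Rightarrow> int \<Rightarrow> 's \<Rightarrow> (nat \<Rightarrow> int) \<Rightarrow> real"
    and g :: "'s \<Rightarrow> (nat \<Rightarrow> int) \<Rightarrow> int"
  assumes P: "prob_space M" and Xm: "X \<in> borel_measurable M"
    and ym: "y \<in> M \<rightarrow>\<^sub>M count_space (signvecs n)"
    and cf: "is_cond_pmf M n X y f" and i: "i < n"
    and g1: "\<And>x w. g x w = 1 \<or> g x w = -1"
    and g2: "\<And>w c. {x. g x w = c} \<in> sets borel"
  shows "{\<omega>\<in>space M. y \<omega> i \<noteq> g (X \<omega>) (drop_coord i (y \<omega>))} \<in> sets M \<and>
     measure M {\<omega>\<in>space M. f i (y \<omega> i) (X \<omega>) (drop_coord i (y \<omega>)) < f i (- y \<omega> i) (X \<omega>) (drop_coord i (y \<omega>))}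
       \<le> measure M {\<omega>\<in>space M. y \<omega> i \<noteq> g (X \<omega>) (drop_coord i (y \<omega>))}"
proof -
  interpret prob_space M by fact
  have fpos: "\<And>x w. f i 1 x w \<ge> 0" "\<And>x w. f i (-1) x w \<ge> 0" "\<And>x w. f i 1 x w + f i (-1) x w = 1"
    using cf i unfolding is_cond_pmf_def by auto
  have fmeas: "\<And>b w. b\<in>{-1,1} \<Longrightarrow> (\<lambda>x. f i b x w) \<in> borel_measurable borel"
    using cf i unfolding is_cond_pmf_def by auto
  have fint: "\<And>b A w. b\<in>{-1,1} \<Longrightarrow> A\<in>sets borel \<Longrightarrow>
           measure M {\<omega> \<in> space M. y \<omega> i = b \<and> X \<omega> \<in> A \<and> drop_coord i (y \<omega>) = w}
           = (\<integral>\<omega>. indicator {\<omega> \<in> space M. X \<omega> \<in> A \<and> drop_coord i (y \<omega>) = w} \<omega>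
                     * f i b (X \<omega>) w \<partial>M)"
    using cf i unfolding is_cond_pmf_def by auto
  define W where "W = drop_coord i ` signvecs n"
  have finW: "finite W" unfolding W_def using finite_signvecs by simp
  define D where "D w = {\<omega>\<in>space M. drop_coord i (y \<omega>) = w}" for w
  define piece where "piece b A w = {\<omega> \<in> space M. y \<omega> i = b \<and> X \<omega> \<in> A \<and> drop_coord i (y \<omega>) = w}" for b A w
  have piece_sets: "piece b A w \<in> sets M" if "A \<in> sets borel" for b A w
  proof -
    have "piece b A w = {\<omega>\<in>space M. y \<omega> i = b \<and> drop_coord i (y \<omega>) = w} \<inter> (X -` A \<inter> space M)"
      unfolding piece_def by auto
    moreover have "X -` A \<inter> space M \<in> sets M" using measurable_sets[OF Xm] that by simp
    ultimately show ?thesis using pred_sets[OF ym, of "\<lambda>v. v i = b \<and> drop_coord i v = w"] by auto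
  qed
  have yi: "y \<omega> i = 1 \<or> y \<omega> i = -1" if "\<omega> \<in> space M" for \<omega>
    using measurable_space[OF ym that] i by (auto simp: signvecs_def)
  have ydc: "drop_coord i (y \<omega>) \<in> W" if "\<omega> \<in> space M" for \<omega>
    using measurable_space[OF ym that] unfolding W_def by auto
  have split: "Z \<in> sets M \<and> measure M Z = (\<Sum>w\<in>W. measure M (Z \<inter> D w))"
    if Zs: "Z \<subseteq> space M" and ZD: "\<And>w. Z \<inter> D w \<in> sets M" for Z
  proof -
    have eq: "Z = (\<Union>w\<in>W. Z \<inter> D w)" using Zs ydc unfolding D_def by auto
    have "(\<Union>w\<in>W. Z \<inter> D w) \<in> sets M" using ZD finW by (intro sets.finite_UN) auto
    moreover have "measure M (\<Union>w\<in>W. Z \<inter> D w) = (\<Sum>w\<in>W. measure M (Z \<inter> D w))"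
      by (rule measure_finite_Union) (use finW ZD in \<open>auto simp: disjoint_family_on_def D_def\<close>)
    ultimately show ?thesis using eq by simp
  qed
  define E where "E = {\<omega>\<in>space M. y \<omega> i \<noteq> g (X \<omega>) (drop_coord i (y \<omega>))}"
  define G where "G = {\<omega>\<in>space M. f i (y \<omega> i) (X \<omega>) (drop_coord i (y \<omega>)) < f i (- y \<omega> i) (X \<omega>) (drop_coord i (y \<omega>))}"
  define A where "A b w = {x. g x w = - b}" for b w
  define B where "B b w = {x. f i b x w < f i (-b) x w}" for b w
  have As: "A b w \<in> sets borel" for b w unfolding A_def using g2 by simp
  have Bs: "B b w \<in> sets borel" if "b \<in> {-1,1}" for b w
  proof -
    have "(\<lambda>x. f i b x w) \<in> borel_measurable borel" "(\<lambda>x. f i (-b) x w) \<in> borel_measurable borel"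
      using fmeas that by auto
    then have "{x \<in> space borel. f i b x w < f i (-b) x w} \<in> sets borel" by measurable
    then show ?thesis unfolding B_def by simp
  qed
  have Ew: "E \<inter> D w = piece 1 (A 1 w) w \<union> piece (-1) (A (-1) w) w" for w
    unfolding E_def D_def piece_def A_def using yi g1 by (auto; metis)
  have Gw: "G \<inter> D w = piece 1 (B 1 w) w \<union> piece (-1) (B (-1) w) w" for w
    unfolding G_def D_def piece_def B_def
  proof (rule set_eqI)
    fix \<omega> show "\<omega> \<in> {\<omega>\<in>space M. f i (y \<omega> i) (X \<omega>) (drop_coord i (y \<omega>)) < f i (- y \<omega> i) (X \<omega>) (drop_coord i (y \<omega>))} \<inter> {\<omega>\<in>space M. drop_coord i (y \<omega>) = w} \<longleftrightarrow>
      \<omega> \<in> {\<omega> \<in> space M. y \<omega> i = 1 \<and> X \<omega> \<in> {x. f i 1 x w < f i (- 1) x w} \<and> drop_coord i (y \<omega>) = w} \<union> {\<omega> \<in> space M. y \<omega> i = - 1 \<and> X \<omega> \<in> {x. f i (- 1) x w < f i (- (- 1)) x w} \<and> drop_coord i (y \<omega>) = w}"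
      using yi[of \<omega>] by (cases "y \<omega> i = 1") auto
  qed
  have pdisj: "piece 1 S w \<inter> piece (-1) T w = {}" for S T w unfolding piece_def by auto
  define I where "I b S w \<omega> = indicator {\<omega> \<in> space M. X \<omega> \<in> S \<and> drop_coord i (y \<omega>) = w} \<omega> * f i b (X \<omega>) w" for b S w \<omega>
  have Iint: "integrable M (I b S w)" if "b \<in> {-1,1}" "S \<in> sets borel" for b S w
  proof (rule integrable_const_bound[where B=1])
    have "f i b x w \<le> 1" for x using fpos[of x w] that by auto
    moreover have "f i b x w \<ge> 0" for x using fpos[of x w] that by auto
    ultimately show "AE x in M. norm (I b S w x) \<le> 1" unfolding I_def by (auto simp: indicator_def)
    have "{\<omega> \<in> space M. X \<omega> \<in> S \<and> drop_coord i (y \<omega>) = w} = {\<omega>\<in>space M. drop_coord i (y \<omega>) = w} \<inter> (X -` S \<inter> space M)"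
      by auto
    moreover have "X -` S \<inter> space M \<in> sets M" using measurable_sets[OF Xm] that by simp
    ultimately have "{\<omega> \<in> space M. X \<omega> \<in> S \<and> drop_coord i (y \<omega>) = w} \<in> sets M"
      using pred_sets[OF ym, of "\<lambda>v. drop_coord i v = w"] by auto
    moreover have "(\<lambda>\<omega>. f i b (X \<omega>) w) \<in> borel_measurable M"
      using measurable_compose[OF Xm fmeas[OF that(1)]] .
    ultimately show "I b S w \<in> borel_measurable M" unfolding I_def
      by (intro borel_measurable_times borel_measurable_indicator)
  qed
  have pw: "I 1 (B 1 w) w \<omega> + I (-1) (B (-1) w) w \<omega> \<le> I 1 (A 1 w) w \<omega> + I (-1) (A (-1) w) w \<omega>" for w \<omega>
  proof -
    have a: "f i 1 (X \<omega>) w \<ge> 0" "f i (-1) (X \<omega>) w \<ge> 0" using fpos by auto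
    show ?thesis using g1[of "X \<omega>" w] a unfolding I_def A_def B_def indicator_def by auto
  qed
  have mw: "measure M (G \<inter> D w) \<le> measure M (E \<inter> D w)" for w
  proof -
    have "measure M (G \<inter> D w) = measure M (piece 1 (B 1 w) w) + measure M (piece (-1) (B (-1) w) w)"
      unfolding Gw by (rule finite_measure_Union) (auto intro!: piece_sets Bs pdisj)
    also have "\<dots> = integral\<^sup>L M (I 1 (B 1 w) w) + integral\<^sup>L M (I (-1) (B (-1) w) w)"
      unfolding piece_def I_def by (simp add: fint Bs)
    also have "\<dots> = (\<integral>\<omega>. I 1 (B 1 w) w \<omega> + I (-1) (B (-1) w) w \<omega> \<partial>M)"
      by (rule sym, rule Bochner_Integration.integral_add) (auto intro!: Iint Bs)
    also have "\<dots> \<le> (\<integral>\<omega>. I 1 (A 1 w) w \<omega> + I (-1) (A (-1) w) w \<omega> \<partial>M)"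
      by (rule integral_mono) (auto intro!: Iint Bs As pw)
    also have "\<dots> = integral\<^sup>L M (I 1 (A 1 w) w) + integral\<^sup>L M (I (-1) (A (-1) w) w)"
      by (rule Bochner_Integration.integral_add) (auto intro!: Iint As)
    also have "\<dots> = measure M (piece 1 (A 1 w) w) + measure M (piece (-1) (A (-1) w) w)"
      unfolding piece_def I_def by (simp add: fint As)
    also have "\<dots> = measure M (E \<inter> D w)"
      unfolding Ew by (rule finite_measure_Union[symmetric]) (auto intro!: piece_sets As pdisj)
    finally show ?thesis .
  qed
  have sE: "E \<in> sets M \<and> measure M E = (\<Sum>w\<in>W. measure M (E \<inter> D w))"
    proof (rule split)
    show "E \<subseteq> space M" unfolding E_def by auto
    show "E \<inter> D w \<in> sets M" for w unfolding Ew by (intro sets.Un piece_sets As)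
  qed
  have sG: "G \<in> sets M \<and> measure M G = (\<Sum>w\<in>W. measure M (G \<inter> D w))"
    proof (rule split)
    show "G \<subseteq> space M" unfolding G_def by auto
    show "G \<inter> D w \<in> sets M" for w unfolding Gw by (intro sets.Un piece_sets Bs) auto
  qed
  have "measure M G \<le> measure M E" using sE sG mw by (simp add: sum_mono)
  then show ?thesis using sE unfolding E_def G_def by simp
qed

definition Gsel :: "nat \<Rightarrow> nat \<Rightarrow> (nat \<Rightarrow> int) \<Rightarrow> (nat \<Rightarrow> int) \<Rightarrow> int" where
  "Gsel n i u w = (if 2 * card {j. j < n - 1 \<and> drop_coord i u j \<noteq> w j} \<le> n - 1 then 1 else -1) * u i"

lemma card_drop:
  assumes i: "i < n"
  shows "card {j. j < n - 1 \<and> drop_coord i u j \<noteq> drop_coord i v j} + (if u i \<noteq> v i then 1 else 0)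
         = card {j. j < n \<and> u j \<noteq> v j}"
proof -
  define h where "h j = (if j < i then j else Suc j)" for j
  define S where "S = {j. j < n \<and> j \<noteq> i \<and> u j \<noteq> v j}"
  define T where "T = {j. j < n - 1 \<and> drop_coord i u j \<noteq> drop_coord i v j}"
  have injh: "inj h" unfolding h_def inj_def by auto
  have ST: "S = h ` T"
  proof (rule set_eqI, rule iffI)
    fix x assume x: "x \<in> S"
    show "x \<in> h ` T"
    proof (cases "x < i")
      case True
      then show ?thesis using x i unfolding S_def T_def h_def drop_coord_def
        by (intro rev_image_eqI[of x]) auto
    next
      case False
      then have "x > i" using x unfolding S_def by auto
      then show ?thesis using x i unfolding S_def T_def h_def drop_coord_def
        by (intro rev_image_eqI[of "x - 1"]) auto
    qed
  next
    fix x assume "x \<in> h ` T"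
    then obtain j where "j \<in> T" "x = h j" by auto
    then show "x \<in> S" unfolding S_def T_def h_def drop_coord_def by (auto split: if_splits)
  qed
  have cT: "card S = card T" unfolding ST by (rule card_image) (use injh in \<open>auto simp: inj_on_def\<close>)
  have finS: "finite S" unfolding S_def by auto
  have "{j. j < n \<and> u j \<noteq> v j} = (if u i \<noteq> v i then insert i S else S)"
    using i unfolding S_def by auto
  moreover have "i \<notin> S" unfolding S_def by auto
  ultimately show ?thesis using finS cT unfolding T_def by auto
qed

lemma err_count:
  assumes n: "n \<ge> 2" and u: "u \<in> signvecs n" and v: "v \<in> signvecs n"
  shows "real (card {i. i < n \<and> v i \<noteq> Gsel n i u (drop_coord i v)}) \<le> 3 * real n * mismatch n u v"
proof -
  define k where "k = card {j. j < n \<and> u j \<noteq> v j}"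
  have uv: "\<And>j. j < n \<Longrightarrow> (u j = 1 \<or> u j = -1) \<and> (v j = 1 \<or> v j = -1)"
    using u v unfolding signvecs_def by auto
  have R: "{j. j < n \<and> - u j \<noteq> v j} = {j. j < n \<and> u j = v j}" using uv by force
  have kR: "k + card {j. j < n \<and> u j = v j} = n"
  proof -
    have "card {j. j < n \<and> u j \<noteq> v j} + card {j. j < n \<and> u j = v j} = card ({j. j < n \<and> u j \<noteq> v j} \<union> {j. j < n \<and> u j = v j})"
      by (rule card_Un_disjoint[symmetric]) auto
    also have "{j. j < n \<and> u j \<noteq> v j} \<union> {j. j < n \<and> u j = v j} = {..<n}" by auto
    finally show ?thesis unfolding k_def by simp
  qed
  have char: "v i \<noteq> Gsel n i u (drop_coord i v) \<longleftrightarrow> (u i \<noteq> v i \<and> 2 * k \<le> n + 1) \<or> (u i = v i \<and> n \<le> 2 * k)"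
    if i: "i < n" for i
  proof -
    have cd: "card {j. j < n - 1 \<and> drop_coord i u j \<noteq> drop_coord i v j} + (if u i \<noteq> v i then 1 else 0) = k"
      using card_drop[OF i] unfolding k_def .
    show ?thesis
    proof (cases "u i = v i")
      case True
      then show ?thesis using cd uv[OF i] n unfolding Gsel_def by auto
    next
      case False
      then show ?thesis using cd uv[OF i] n unfolding Gsel_def by auto
    qed
  qed
  have "{i. i < n \<and> v i \<noteq> Gsel n i u (drop_coord i v)} =
        {i. i < n \<and> u i \<noteq> v i \<and> 2 * k \<le> n + 1} \<union> {i. i < n \<and> u i = v i \<and> n \<le> 2 * k}"
    using char by auto
  then have "card {i. i < n \<and> v i \<noteq> Gsel n i u (drop_coord i v)} \<le>
        card {i. i < n \<and> u i \<noteq> v i \<and> 2 * k \<le> n + 1} + card {i. i < n \<and> u i = v i \<and> n \<le> 2 * k}"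
    by (simp add: card_Un_le)
  also have "card {i. i < n \<and> u i \<noteq> v i \<and> 2 * k \<le> n + 1} = (if 2 * k \<le> n + 1 then k else 0)"
    unfolding k_def by auto
  also have "card {i. i < n \<and> u i = v i \<and> n \<le> 2 * k} = (if n \<le> 2 * k then n - k else 0)"
    using kR by auto
  also have "(if 2 * k \<le> n + 1 then k else 0) + (if n \<le> 2 * k then n - k else 0) \<le> 3 * min k (n - k)"
    using n kR by auto
  finally have ce: "card {i. i < n \<and> v i \<noteq> Gsel n i u (drop_coord i v)} \<le> 3 * min k (n - k)" .
  have "mismatch n u v = min (real k / real n) (real (n - k) / real n)"
  proof -
    have nk: "card {j. j < n \<and> u j = v j} = n - k" using kR by simp
    show ?thesis unfolding mismatch_def R nk k_def[symmetric] ..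
  qed
  also have "\<dots> = real (min k (n - k)) / real n" using n by (auto simp: min_def divide_le_cancel)
  finally have "3 * real n * mismatch n u v = 3 * real (min k (n - k))" using n by simp
  then show ?thesis using ce by linarith
qed

lemma mismatch_bounds: "0 \<le> mismatch n u v \<and> mismatch n u v \<le> 1"
proof -
  have "card {i. i < n \<and> u i \<noteq> v i} \<le> card {..<n}" by (rule card_mono) auto
  then have "real (card {i. i < n \<and> u i \<noteq> v i}) / real n \<le> 1"
    by (cases "n = 0") (auto simp: divide_le_eq)
  then show ?thesis unfolding mismatch_def by auto
qed

theorem lemmaF3:
  fixes M :: "'a measure" and n :: nat
    and X :: "'a \<Rightarrow> 's::polish_space"
    and y :: "'a \<Rightarrow> nat \<Rightarrow> int"
    and F :: "('s \<Rightarrow> nat \<Rightarrow> int) set"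
    and f :: "nat \<Rightarrow> int \<Rightarrow> 's \<Rightarrow> (nat \<Rightarrow> int) \<Rightarrow> real"
  assumes "prob_space M"
    and "X \<in> borel_measurable M"
    and "y \<in> M \<rightarrow>\<^sub>M count_space (signvecs n)"
    and "\<forall>yh\<in>F. yh \<in> borel \<rightarrow>\<^sub>M count_space (signvecs n)"
    and "is_cond_pmf M n X y f"
  shows "(INF yh\<in>F. ereal (prob_space.expectation M (\<lambda>\<omega>. mismatch n (yh (X \<omega>)) (y \<omega>))))
         \<ge> ereal ((real n - 1) / (3 * real n - 1) * (1 / real n) *
              (\<Sum>i<n. measure M {\<omega> \<in> space M.
                  f i (y \<omega> i) (X \<omega>) (drop_coord i (y \<omega>))
                  < f i (- y \<omega> i) (X \<omega>) (drop_coord i (y \<omega>))}))"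
proof -
  note P = assms(1) and Xm = assms(2) and ym = assms(3) and cf = assms(5)
  interpret prob_space M by fact
  have Sfin: "finite (signvecs n)" by (rule finite_signvecs)
  define Gs where "Gs i = {\<omega> \<in> space M.
                  f i (y \<omega> i) (X \<omega>) (drop_coord i (y \<omega>))
                  < f i (- y \<omega> i) (X \<omega>) (drop_coord i (y \<omega>))}" for i
  have main: "ereal ((real n - 1) / (3 * real n - 1) * (1 / real n) * (\<Sum>i<n. measure M (Gs i)))
     \<le> ereal (\<integral>\<omega>. mismatch n (yh (X \<omega>)) (y \<omega>) \<partial>M)" if yhF: "yh \<in> F" for yh
  proof -
    have yhm: "yh \<in> borel \<rightarrow>\<^sub>M count_space (signvecs n)" using assms(4) yhF by auto
    have um: "(\<lambda>\<omega>. yh (X \<omega>)) \<in> M \<rightarrow>\<^sub>M count_space (signvecs n)"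
      using measurable_compose[OF Xm yhm] .
    define Mis where "Mis \<omega> = mismatch n (yh (X \<omega>)) (y \<omega>)" for \<omega>
    have Mism: "Mis \<in> borel_measurable M"
      unfolding Mis_def by (rule pair_fun_meas[OF um ym Sfin])
    have Misi: "integrable M Mis"
      by (rule integrable_const_bound[where B=1]) (use Mism mismatch_bounds in \<open>auto simp: Mis_def\<close>)
    have e0: "0 \<le> integral\<^sup>L M Mis"
      by (rule integral_nonneg_AE) (use mismatch_bounds in \<open>auto simp: Mis_def\<close>)
    have Gnn: "0 \<le> (\<Sum>i<n. measure M (Gs i))" by (simp add: sum_nonneg)
    show ?thesis
    proof (cases "n \<ge> 2")
      case False
      then have "n = 0 \<or> n = 1" by auto
      then have "(real n - 1) / (3 * real n - 1) * (1 / real n) * (\<Sum>i<n. measure M (Gs i)) = 0" by auto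
      then show ?thesis using e0 unfolding Mis_def by (simp only: ereal_less_eq)
    next
      case n2: True
      define Es where "Es i = {\<omega>\<in>space M. y \<omega> i \<noteq> Gsel n i (yh (X \<omega>)) (drop_coord i (y \<omega>))}" for i
      have yhS: "yh x \<in> signvecs n" for x using measurable_space[OF yhm] by simp
      have cb: "Es i \<in> sets M \<and> measure M (Gs i) \<le> measure M (Es i)" if i: "i < n" for i
        unfolding Es_def Gs_def
      proof (rule coord_bound[OF P Xm ym cf i])
        show "Gsel n i (yh x) w = 1 \<or> Gsel n i (yh x) w = -1" for x w
          using yhS[of x] i unfolding Gsel_def signvecs_def by auto
        show "{x. Gsel n i (yh x) w = c} \<in> sets borel" for w c
          using pred_sets[OF yhm, of "\<lambda>u. Gsel n i u w = c"] by simp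
      qed
      have "(\<Sum>i<n. measure M (Gs i)) \<le> (\<Sum>i<n. measure M (Es i))"
        using cb by (intro sum_mono) auto
      also have "\<dots> = (\<Sum>i<n. integral\<^sup>L M (indicator (Es i)))"
        using cb by (intro sum.cong) auto
      also have "\<dots> = (\<integral>\<omega>. (\<Sum>i<n. indicator (Es i) \<omega>) \<partial>M)"
        by (rule sym, rule Bochner_Integration.integral_sum) (use cb in \<open>auto intro!: integrable_real_indicator simp: less_top[symmetric]\<close>)
      also have "\<dots> \<le> (\<integral>\<omega>. 3 * real n * Mis \<omega> \<partial>M)"
      proof (rule integral_mono)
        show "integrable M (\<lambda>\<omega>. \<Sum>i<n. indicator (Es i) \<omega> :: real)" using cb by (auto intro!: integrable_real_indicator simp: less_top[symmetric])
        show "integrable M (\<lambda>\<omega>. 3 * real n * Mis \<omega>)" using Misi by auto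
        fix \<omega> assume w: "\<omega> \<in> space M"
        have "(\<Sum>i<n. indicator (Es i) \<omega> :: real) = real (card {i. i < n \<and> y \<omega> i \<noteq> Gsel n i (yh (X \<omega>)) (drop_coord i (y \<omega>))})"
          unfolding indicator_def Es_def using w by (simp add: Int_def)
        also have "\<dots> \<le> 3 * real n * Mis \<omega>"
          unfolding Mis_def by (rule err_count[OF n2 yhS measurable_space[OF ym w, simplified]])
        finally show "(\<Sum>i<n. indicator (Es i) \<omega> :: real) \<le> 3 * real n * Mis \<omega>" .
      qed
      also have "\<dots> = 3 * real n * integral\<^sup>L M Mis" by simp
      finally have sG: "(\<Sum>i<n. measure M (Gs i)) \<le> 3 * real n * integral\<^sup>L M Mis" .
      have c: "(real n - 1) / (3 * real n - 1) * (1 / real n) \<le> 1 / (3 * real n)"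
        using n2 by (simp add: field_simps)
      have "(real n - 1) / (3 * real n - 1) * (1 / real n) * (\<Sum>i<n. measure M (Gs i))
            \<le> 1 / (3 * real n) * (\<Sum>i<n. measure M (Gs i))"
        by (rule mult_right_mono[OF c Gnn])
      also have "\<dots> \<le> integral\<^sup>L M Mis" using sG n2 by (simp add: field_simps)
      finally show ?thesis unfolding Mis_def by simp
    qed
  qed
  show ?thesis unfolding Gs_def[symmetric] by (rule INF_greatest) (rule main)
qed

end
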